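(* Let $G$ be a $1$-regular graph with $n$ vertices. Then the complement $\overline{G}$ is divergent if and only if $n\geq 6$.
   Context: All graphs are finite and simple. A complete in a graph is a set of pairwise adjacent vertices; a clique is a maximal complete. The clique graph $K(G)$ is the intersection graph of the cliques of $G$. Iterated clique graphs: $K^0(G)=G$, $K^n(G)=K(K^{n-1}(G))$ for $n\ge 1$. $G$ is convergent if the sequence $(K^n(G))_{n\ge0}$ contains only finitely many graphs up to isomorphism, and divergent otherwise. *)

theory Defs
  imports Main
begin

text \<open>Finite simple graphs whose vertices are natural numbers (every finite graph is
isomorphic to one of these; all notions below are isomorphism-invariant).\<close>

record ngraph =
  verts :: "nat set"
  adj :: "nat \<Rightarrow> nat \<Rightarrow> bool"

definition simple_graph :: "ngraph \<Rightarrow> bool" where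
  "simple_graph G \<longleftrightarrow> finite (verts G)
     \<and> (\<forall>u v. adj G u v \<longrightarrow> u \<in> verts G \<and> v \<in> verts G)
     \<and> (\<forall>u v. adj G u v \<longrightarrow> adj G v u)
     \<and> (\<forall>u. \<not> adj G u u)"

definition regular :: "nat \<Rightarrow> ngraph \<Rightarrow> bool" where
  "regular k G \<longleftrightarrow> (\<forall>v\<in>verts G. card {u\<in>verts G. adj G v u} = k)"

definition complement :: "ngraph \<Rightarrow> ngraph" where
  "complement G = \<lparr>verts = verts G,
     adj = (\<lambda>u v. u \<in> verts G \<and> v \<in> verts G \<and> u \<noteq> v \<and> \<not> adj G u v)\<rparr>"

definition complete_set :: "ngraph \<Rightarrow> nat set \<Rightarrow> bool" where
  "complete_set G S \<longleftrightarrow> S \<subseteq> verts G \<and> (\<forall>u\<in>S. \<forall>v\<in>S. u \<noteq> v \<longrightarrow> adj G u v)"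

definition clique :: "ngraph \<Rightarrow> nat set \<Rightarrow> bool" where
  "clique G S \<longleftrightarrow> complete_set G S \<and> (\<forall>T. complete_set G T \<and> S \<subseteq> T \<longrightarrow> T = S)"

text \<open>Injective coding of finite sets of naturals as naturals (binary representation),
used to name the vertices of the clique graph.\<close>
definition set_code :: "nat set \<Rightarrow> nat" where
  "set_code C = (\<Sum>x\<in>C. 2 ^ x)"

definition clique_graph :: "ngraph \<Rightarrow> ngraph" where
  "clique_graph G = \<lparr>verts = set_code ` {C. clique G C},
     adj = (\<lambda>a b. \<exists>C D. clique G C \<and> clique G D \<and> a = set_code C \<and> b = set_code D
                        \<and> C \<noteq> D \<and> C \<inter> D \<noteq> {})\<rparr>"

definition iter_clique_graph :: "nat \<Rightarrow> ngraph \<Rightarrow> ngraph" where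
  "iter_clique_graph n G = (clique_graph ^^ n) G"

definition graph_iso :: "ngraph \<Rightarrow> ngraph \<Rightarrow> bool" where
  "graph_iso G H \<longleftrightarrow> (\<exists>f. bij_betw f (verts G) (verts H)
     \<and> (\<forall>u\<in>verts G. \<forall>v\<in>verts G. adj G u v \<longleftrightarrow> adj H (f u) (f v)))"

definition convergent_graph :: "ngraph \<Rightarrow> bool" where
  "convergent_graph G \<longleftrightarrow> (\<exists>S. finite S \<and> (\<forall>n. \<exists>H\<in>S. graph_iso (iter_clique_graph n G) H))"

definition divergent_graph :: "ngraph \<Rightarrow> bool" where
  "divergent_graph G \<longleftrightarrow> \<not> convergent_graph G"

end

theory Submission imports Defs begin

definition invol :: "nat set \<Rightarrow> (nat \<Rightarrow> nat) \<Rightarrow> bool" where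
  "invol V p \<longleftrightarrow> (\<forall>v\<in>V. p v \<in> V \<and> p v \<noteq> v \<and> p (p v) = v)"

definition transv :: "nat set \<Rightarrow> (nat \<Rightarrow> nat) \<Rightarrow> nat set \<Rightarrow> bool" where
  "transv V p C \<longleftrightarrow> C \<subseteq> V \<and> (\<forall>v\<in>V. v \<in> C \<longleftrightarrow> p v \<notin> C)"

lemma transv_count:
  "finite V \<Longrightarrow> invol V p \<Longrightarrow> card {C. transv V p C} = 2 ^ (card V div 2) \<and> even (card V)"
proof (induction "card V" arbitrary: V rule: less_induct)
  case less
  show ?case
  proof (cases "V = {}")
    case True
    have "{C. transv V p C} = {{}}" using True by (auto simp: transv_def)
    then show ?thesis using True by simp
  next
    case False
    then obtain v where v: "v \<in> V" by blast
    define W where "W = V - {v, p v}"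
    have pv: "p v \<in> V" "p v \<noteq> v" "p (p v) = v" using less.prems v by (auto simp: invol_def)
    have cW: "card W = card V - 2" using pv v less.prems unfolding W_def
      by (subst card_Diff_subset) auto
    have cV: "card V \<ge> 2"
    proof -
      have "{v, p v} \<subseteq> V" using v pv by auto
      then have "card {v, p v} \<le> card V" using less.prems by (intro card_mono) auto
      then show ?thesis using pv by simp
    qed
    have pw: "p w \<in> W \<and> p w \<noteq> w \<and> p (p w) = w" if w: "w \<in> W" for w
    proof -
      have wV: "w \<in> V" "w \<noteq> v" "w \<noteq> p v" using w by (auto simp: W_def)
      have a: "p w \<in> V" "p w \<noteq> w" "p (p w) = w" using less.prems wV(1) by (auto simp: invol_def)
      have "p w \<noteq> v" using a(3) wV(3) by auto
      moreover have "p w \<noteq> p v" using a(3) pv(3) wV(2) by metis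
      ultimately show ?thesis using a by (auto simp: W_def)
    qed
    have iW: "invol W p" using pw unfolding invol_def by blast
    have fW: "finite W" using less.prems unfolding W_def by auto
    have IH: "card {C. transv W p C} = 2 ^ (card W div 2) \<and> even (card W)"
      using less.hyps[of W] cW cV iW fW by simp
    define X where "X = {C. transv W p C}"
    have vW: "v \<notin> W" "p v \<notin> W" by (auto simp: W_def)
    have eq: "{C. transv V p C} = insert v ` X \<union> insert (p v) ` X"
    proof (intro equalityI subsetI)
      fix C assume "C \<in> {C. transv V p C}"
      then have C: "C \<subseteq> V" "\<And>u. u \<in> V \<Longrightarrow> u \<in> C \<longleftrightarrow> p u \<notin> C" by (auto simp: transv_def)
      have T: "transv W p (C - {v, p v})"
        unfolding transv_def
      proof (intro conjI ballI)
        show "C - {v, p v} \<subseteq> W" using C(1) by (auto simp: W_def)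
        fix w assume w: "w \<in> W"
        have "w \<in> V" using w by (auto simp: W_def)
        then show "w \<in> C - {v, p v} \<longleftrightarrow> p w \<notin> C - {v, p v}"
          using C(2)[of w] pw[OF w] w vW by auto
      qed
      show "C \<in> insert v ` X \<union> insert (p v) ` X"
      proof (cases "v \<in> C")
        case True
        then have "p v \<notin> C" using C(2)[of v] v by blast
        then have "C = insert v (C - {v, p v})" using True by auto
        then show ?thesis using T unfolding X_def by blast
      next
        case False
        then have "p v \<in> C" using C(2)[of v] v by blast
        then have "C = insert (p v) (C - {v, p v})" using False by auto
        then show ?thesis using T unfolding X_def by blast
      qed
    next
      fix C assume "C \<in> insert v ` X \<union> insert (p v) ` X"
      then obtain T w where T: "transv W p T" and w: "w = v \<or> w = p v" and C: "C = insert w T"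
        unfolding X_def by blast
      have TW: "T \<subseteq> W" and Tc: "\<And>u. u \<in> W \<Longrightarrow> u \<in> T \<longleftrightarrow> p u \<notin> T"
        using T by (auto simp: transv_def)
      have "C \<subseteq> V" using TW w C pv v by (auto simp: W_def)
      moreover have "u \<in> C \<longleftrightarrow> p u \<notin> C" if u: "u \<in> V" for u
      proof (cases "u \<in> W")
        case True
        then show ?thesis using Tc[OF True] pw[OF True] C vW w by auto
      next
        case False
        then have "u = v \<or> u = p v" using u by (auto simp: W_def)
        then show ?thesis using C w TW vW pv by auto
      qed
      ultimately show "C \<in> {C. transv V p C}" by (simp add: transv_def)
    qed
    have XW: "\<And>T. T \<in> X \<Longrightarrow> T \<subseteq> W" unfolding X_def transv_def by blast
    have disj: "insert v ` X \<inter> insert (p v) ` X = {}"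
    proof -
      { fix T T' assume "T \<in> X" "T' \<in> X" "insert v T = insert (p v) T'"
        then have False using XW vW pv by blast }
      then show ?thesis by blast
    qed
    have inj1: "inj_on (insert v) X"
      unfolding inj_on_def using XW vW by (metis insert_ident subsetD)
    have inj2: "inj_on (insert (p v)) X"
      unfolding inj_on_def using XW vW by (metis insert_ident subsetD)
    have fX: "finite X"
    proof -
      have "X \<subseteq> Pow W" using XW by blast
      then show ?thesis using fW finite_subset by blast
    qed
    have "card {C. transv V p C} = card X + card X"
      unfolding eq using disj inj1 inj2 fX
      by (simp add: card_Un_disjoint card_image)
    moreover have "card X = 2 ^ (card W div 2)" "even (card W)" using IH unfolding X_def by auto
    moreover have "card V = card W + 2" using cW cV by simp
    ultimately show ?thesis by simp
  qed
qed

lemma bit_set_code: "finite C \<Longrightarrow> bit (set_code C) n \<longleftrightarrow> n \<in> C"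
proof (induction C arbitrary: n rule: finite_induct)
  case empty then show ?case by (simp add: set_code_def)
next
  case (insert x F)
  have "set_code (insert x F) = 2 ^ x + set_code F"
    using insert by (simp add: set_code_def)
  moreover have "bit (2 ^ x + set_code F) n \<longleftrightarrow> bit ((2::nat) ^ x) n \<or> bit (set_code F) n"
    by (rule bit_disjunctive_add_iff) (use insert in \<open>auto simp: bit_exp_iff\<close>)
  ultimately show ?case using insert by (auto simp: bit_exp_iff)
qed

lemma set_code_inj: "finite C \<Longrightarrow> finite D \<Longrightarrow> set_code C = set_code D \<Longrightarrow> C = D"
  by (metis bit_set_code subsetI subset_antisym)

definition octa :: "ngraph \<Rightarrow> (nat \<Rightarrow> nat) \<Rightarrow> bool" where
  "octa G p \<longleftrightarrow> finite (verts G) \<and> invol (verts G) p \<and>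
     (\<forall>u v. adj G u v \<longleftrightarrow> u \<in> verts G \<and> v \<in> verts G \<and> u \<noteq> v \<and> u \<noteq> p v)"

lemma clique_octa:
  assumes "octa G p"
  shows "clique G C \<longleftrightarrow> transv (verts G) p C"
proof -
  have inv: "\<And>v. v \<in> verts G \<Longrightarrow> p v \<in> verts G \<and> p v \<noteq> v \<and> p (p v) = v"
    using assms by (auto simp: octa_def invol_def)
  have ad: "\<And>u v. adj G u v \<longleftrightarrow> u \<in> verts G \<and> v \<in> verts G \<and> u \<noteq> v \<and> u \<noteq> p v"
    using assms by (auto simp: octa_def)
  have cs: "complete_set G S \<longleftrightarrow> S \<subseteq> verts G \<and> (\<forall>u\<in>S. p u \<notin> S)" for S
  proof
    assume "complete_set G S"
    then have S: "S \<subseteq> verts G" "\<And>u v. u \<in> S \<Longrightarrow> v \<in> S \<Longrightarrow> u \<noteq> v \<Longrightarrow> adj G u v"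
      unfolding complete_set_def by auto
    have "p u \<notin> S" if u: "u \<in> S" for u
    proof
      assume pu: "p u \<in> S"
      have uV: "u \<in> verts G" using S u by blast
      have "adj G u (p u)" using S(2)[OF u pu] inv[OF uV] by auto
      then have "u \<noteq> p (p u)" unfolding ad by blast
      then show False using inv[OF uV] by simp
    qed
    then show "S \<subseteq> verts G \<and> (\<forall>u\<in>S. p u \<notin> S)" using S by blast
  next
    assume a: "S \<subseteq> verts G \<and> (\<forall>u\<in>S. p u \<notin> S)"
    show "complete_set G S" unfolding complete_set_def
    proof (intro conjI ballI impI)
      show "S \<subseteq> verts G" using a by blast
      fix u v assume uv: "u \<in> S" "v \<in> S" "u \<noteq> v"
      have "u \<noteq> p v" using a uv by blast
      then show "adj G u v" unfolding ad using a uv by blast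
    qed
  qed
  show ?thesis
  proof
    assume c: "clique G C"
    then have C: "C \<subseteq> verts G" "\<forall>u\<in>C. p u \<notin> C" unfolding clique_def cs by auto
    have "v \<in> C" if v: "v \<in> verts G" "p v \<notin> C" for v
    proof (rule ccontr)
      assume nv: "v \<notin> C"
      have "complete_set G (insert v C)" unfolding cs
      proof (intro conjI ballI)
        show "insert v C \<subseteq> verts G" using C v by blast
        fix u assume u: "u \<in> insert v C"
        show "p u \<notin> insert v C"
        proof (cases "u = v")
          case True then show ?thesis using v inv[of v] by auto
        next
          case False
          then have uC: "u \<in> C" using u by blast
          then have uV: "u \<in> verts G" using C by blast
          have "p u \<noteq> v"
          proof
            assume "p u = v"
            then have "u = p v" using inv[OF uV] by metis
            then show False using uC v(2) by blast
          qed
          then show ?thesis using C(2) uC by blast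
        qed
      qed
      then have "insert v C = C" using c unfolding clique_def by blast
      then show False using nv by blast
    qed
    then show "transv (verts G) p C" unfolding transv_def using C by blast
  next
    assume t: "transv (verts G) p C"
    then have C: "C \<subseteq> verts G" "\<And>v. v \<in> verts G \<Longrightarrow> v \<in> C \<longleftrightarrow> p v \<notin> C"
      by (auto simp: transv_def)
    have "complete_set G C" unfolding cs using C by blast
    moreover have "T = C" if T: "complete_set G T" "C \<subseteq> T" for T
    proof -
      have T': "T \<subseteq> verts G" "\<forall>u\<in>T. p u \<notin> T" using T(1) unfolding cs by auto
      show ?thesis
      proof (rule ccontr)
        assume "T \<noteq> C"
        then obtain t where t: "t \<in> T" "t \<notin> C" using T(2) by blast
        then have "p t \<in> C" using C(2)[of t] T' by blast
        then show False using T' t T(2) by blast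
      qed
    qed
    ultimately show "clique G C" unfolding clique_def by blast
  qed
qed

lemma transv_img:
  assumes "invol V p" "transv V p C" shows "transv V p (p ` C)"
proof -
  have C: "C \<subseteq> V" "\<And>v. v \<in> V \<Longrightarrow> v \<in> C \<longleftrightarrow> p v \<notin> C"
    using assms(2) unfolding transv_def by blast+
  have inv: "\<And>v. v \<in> V \<Longrightarrow> p v \<in> V \<and> p v \<noteq> v \<and> p (p v) = v"
    using assms(1) unfolding invol_def by blast
  have "p ` C \<subseteq> V" using C inv by blast
  moreover have "v \<in> p ` C \<longleftrightarrow> p v \<notin> p ` C" if v: "v \<in> V" for v
  proof -
    have e1: "v \<in> p ` C \<longleftrightarrow> p v \<in> C"
    proof
      assume "v \<in> p ` C"
      then obtain c where c: "c \<in> C" "v = p c" by blast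
      then have "c \<in> V" using C(1) by blast
      then show "p v \<in> C" using c inv by simp
    next
      assume "p v \<in> C"
      moreover have "p (p v) = v" using inv v by simp
      ultimately show "v \<in> p ` C" by (metis imageI)
    qed
    have e2: "p v \<in> p ` C \<longleftrightarrow> v \<in> C"
    proof
      assume "p v \<in> p ` C"
      then obtain c where c: "c \<in> C" "p v = p c" by blast
      then have "c \<in> V" using C(1) by blast
      then have "p (p c) = c" using inv by simp
      then show "v \<in> C" using c inv v by metis
    next
      assume "v \<in> C"
      then show "p v \<in> p ` C" by blast
    qed
    show ?thesis using e1 e2 C(2)[OF v] by blast
  qed
  ultimately show ?thesis unfolding transv_def by blast
qed

lemma transv_pp:
  assumes "invol V p" "transv V p C" shows "p ` (p ` C) = C"
proof -
  have "\<And>c. c \<in> C \<Longrightarrow> p (p c) = c"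
  proof -
    fix c assume "c \<in> C"
    then have "c \<in> V" using assms(2) unfolding transv_def by blast
    then show "p (p c) = c" using assms(1) unfolding invol_def by blast
  qed
  then show ?thesis unfolding image_image by simp
qed

lemma transv_disj:
  assumes "invol V p" "transv V p C" "transv V p D" shows "C \<inter> D = {} \<longleftrightarrow> C = p ` D"
proof
  assume d: "C \<inter> D = {}"
  show "C = p ` D"
  proof (intro equalityI subsetI)
    fix c assume c: "c \<in> C"
    then have cV: "c \<in> V" using assms(2) unfolding transv_def by blast
    have "c \<notin> D" using d c by blast
    then have "p c \<in> D" using assms(3) cV unfolding transv_def by blast
    moreover have "p (p c) = c" using assms(1) cV unfolding invol_def by blast
    ultimately show "c \<in> p ` D" by (metis image_eqI)
  next
    fix x assume "x \<in> p ` D"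
    then obtain d where d: "d \<in> D" "x = p d" by blast
    then have dV: "d \<in> V" using assms(3) unfolding transv_def by blast
    have "d \<notin> C" using d d by (metis disjoint_iff \<open>C \<inter> D = {}\<close>)
    then show "x \<in> C" using assms(2) dV d unfolding transv_def by blast
  qed
next
  assume e: "C = p ` D"
  show "C \<inter> D = {}"
  proof (rule ccontr)
    assume "C \<inter> D \<noteq> {}"
    then obtain x where x: "x \<in> C" "x \<in> D" by blast
    then obtain d where d: "d \<in> D" "x = p d" using e by blast
    have "d \<in> V" using d assms(3) unfolding transv_def by blast
    then have "p d \<notin> D" using assms(3) d unfolding transv_def by blast
    then show False using x d by simp
  qed
qed

lemma transv_ne:
  assumes "invol V p" "transv V p C" "V \<noteq> {}" shows "p ` C \<noteq> C"
proof
  assume e: "p ` C = C"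
  obtain v where v: "v \<in> V" using assms(3) by blast
  have "C \<inter> C = {}" using transv_disj[OF assms(1,2,2)] e by simp
  then have "C = {}" by simp
  then show False using assms(2) v unfolding transv_def by blast
qed


definition qmap :: "(nat \<Rightarrow> nat) \<Rightarrow> nat \<Rightarrow> nat" where
  "qmap p a = set_code (p ` {i. bit a i})"

lemma K_octa:
  assumes oc: "octa G p" and ne: "verts G \<noteq> {}"
  shows "octa (clique_graph G) (qmap p) \<and> card (verts (clique_graph G)) = 2 ^ (card (verts G) div 2)"
proof -
  define V where "V = verts G"
  define Tr where "Tr = {C. transv V p C}"
  have fV: "finite V" and iV: "invol V p" using oc unfolding octa_def V_def by blast+
  have cl: "\<And>C. clique G C \<longleftrightarrow> C \<in> Tr" using clique_octa[OF oc] unfolding Tr_def V_def by simp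
  have VK: "verts (clique_graph G) = set_code ` Tr"
  proof -
    have "{C. clique G C} = Tr" using cl by blast
    then show ?thesis unfolding clique_graph_def by simp
  qed
  have TrV: "\<And>C. C \<in> Tr \<Longrightarrow> C \<subseteq> V" unfolding Tr_def transv_def by blast
  have finC: "\<And>C. C \<in> Tr \<Longrightarrow> finite C" using TrV fV finite_subset by blast
  have inj: "inj_on set_code Tr" unfolding inj_on_def using finC set_code_inj by blast
  have dec: "\<And>C. C \<in> Tr \<Longrightarrow> {i. bit (set_code C) i} = C" using finC bit_set_code by blast
  have qC: "\<And>C. C \<in> Tr \<Longrightarrow> qmap p (set_code C) = set_code (p ` C)"
    unfolding qmap_def using dec by simp
  have pTr: "\<And>C. C \<in> Tr \<Longrightarrow> p ` C \<in> Tr" unfolding Tr_def using transv_img[OF iV] by blast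
  have ppTr: "\<And>C. C \<in> Tr \<Longrightarrow> p ` (p ` C) = C" unfolding Tr_def using transv_pp[OF iV] by blast
  have neTr: "\<And>C. C \<in> Tr \<Longrightarrow> p ` C \<noteq> C" unfolding Tr_def using transv_ne[OF iV] ne V_def by blast
  have disjTr: "\<And>C D. C \<in> Tr \<Longrightarrow> D \<in> Tr \<Longrightarrow> C \<inter> D = {} \<longleftrightarrow> C = p ` D"
    unfolding Tr_def using transv_disj[OF iV] by blast
  have fTr: "finite Tr" using TrV fV by (meson Pow_iff finite_Pow_iff rev_finite_subset subsetI)
  have card: "card (verts (clique_graph G)) = 2 ^ (card (verts G) div 2)"
    unfolding VK using card_image[OF inj] transv_count[OF fV iV] unfolding Tr_def V_def by simp
  have fK: "finite (verts (clique_graph G))" unfolding VK using fTr by simp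
  have iK: "invol (verts (clique_graph G)) (qmap p)"
    unfolding invol_def VK
  proof (intro ballI)
    fix a assume "a \<in> set_code ` Tr"
    then obtain C where C: "C \<in> Tr" "a = set_code C" by blast
    have 1: "qmap p a \<in> set_code ` Tr" using C qC pTr by simp
    have 2: "qmap p a \<noteq> a"
    proof
      assume "qmap p a = a"
      then have "set_code (p ` C) = set_code C" using C qC by simp
      then have "p ` C = C" using inj pTr C unfolding inj_on_def by blast
      then show False using neTr C by blast
    qed
    have 3: "qmap p (qmap p a) = a" using C qC pTr ppTr by simp
    show "qmap p a \<in> set_code ` Tr \<and> qmap p a \<noteq> a \<and> qmap p (qmap p a) = a" using 1 2 3 by blast
  qed
  have aK: "adj (clique_graph G) a b \<longleftrightarrow> a \<in> verts (clique_graph G) \<and> b \<in> verts (clique_graph G) \<and> a \<noteq> b \<and> a \<noteq> qmap p b" for a b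
  proof
    assume "adj (clique_graph G) a b"
    then obtain C D where CD: "C \<in> Tr" "D \<in> Tr" "a = set_code C" "b = set_code D" "C \<noteq> D" "C \<inter> D \<noteq> {}"
      unfolding clique_graph_def using cl by auto
    have "a \<noteq> b" using CD inj unfolding inj_on_def by blast
    moreover have "a \<noteq> qmap p b"
    proof
      assume "a = qmap p b"
      then have "set_code C = set_code (p ` D)" using CD qC by simp
      then have "C = p ` D" using inj pTr CD unfolding inj_on_def by blast
      then show False using disjTr CD by blast
    qed
    ultimately show "a \<in> verts (clique_graph G) \<and> b \<in> verts (clique_graph G) \<and> a \<noteq> b \<and> a \<noteq> qmap p b"
      using CD VK by simp
  next
    assume h: "a \<in> verts (clique_graph G) \<and> b \<in> verts (clique_graph G) \<and> a \<noteq> b \<and> a \<noteq> qmap p b"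
    then obtain C D where CD: "C \<in> Tr" "D \<in> Tr" "a = set_code C" "b = set_code D" using VK by auto
    have "C \<noteq> D" using h CD by blast
    moreover have "C \<inter> D \<noteq> {}"
    proof
      assume "C \<inter> D = {}"
      then have "C = p ` D" using disjTr CD by blast
      then have "a = qmap p b" using CD qC by simp
      then show False using h by blast
    qed
    ultimately show "adj (clique_graph G) a b" unfolding clique_graph_def using cl CD by auto
  qed
  show ?thesis using fK iK aK card unfolding octa_def by blast
qed


lemma iter_Suc: "iter_clique_graph (Suc n) H = clique_graph (iter_clique_graph n H)"
  by (simp add: iter_clique_graph_def)

lemma iter_0: "iter_clique_graph 0 H = H"
  by (simp add: iter_clique_graph_def)

lemma bounded_convergent:
  assumes "\<And>n. finite (verts (iter_clique_graph n G)) \<and> card (verts (iter_clique_graph n G)) \<le> B"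
  shows "convergent_graph G"
proof -
  define mk :: "nat \<times> (nat \<times> nat) set \<Rightarrow> ngraph" where
    "mk = (\<lambda>(k, R). \<lparr>verts = {0..<k}, adj = (\<lambda>u v. (u, v) \<in> R)\<rparr>)"
  define S where "S = mk ` ({..B} \<times> Pow ({..<B} \<times> {..<B}))"
  have fS: "finite S" unfolding S_def by simp
  have iso: "\<exists>H'\<in>S. graph_iso H H'" if H: "finite (verts H)" "card (verts H) \<le> B" for H
  proof -
    define k where "k = card (verts H)"
    obtain f where f: "bij_betw f (verts H) {0..<k}"
      using ex_bij_betw_finite_nat[OF H(1)] unfolding k_def by blast
    define R where "R = {(f u, f v) | u v. u \<in> verts H \<and> v \<in> verts H \<and> adj H u v}"
    have fi: "f ` verts H = {0..<k}" and inj: "inj_on f (verts H)" using f unfolding bij_betw_def by auto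
    have RB: "R \<subseteq> {..<B} \<times> {..<B}"
    proof
      fix x assume "x \<in> R"
      then obtain u v where "u \<in> verts H" "v \<in> verts H" "x = (f u, f v)" unfolding R_def by blast
      then have "f u < k" "f v < k" using fi by auto
      then show "x \<in> {..<B} \<times> {..<B}" using \<open>x = (f u, f v)\<close> H(2) k_def by auto
    qed
    have "mk (k, R) \<in> S" unfolding S_def using RB H(2) k_def by auto
    moreover have "graph_iso H (mk (k, R))"
      unfolding graph_iso_def
    proof (intro exI conjI)
      show "bij_betw f (verts H) (verts (mk (k, R)))" using f by (simp add: mk_def)
      show "\<forall>u\<in>verts H. \<forall>v\<in>verts H. adj H u v = adj (mk (k, R)) (f u) (f v)"
      proof (intro ballI)
        fix u v assume uv: "u \<in> verts H" "v \<in> verts H"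
        have "(f u, f v) \<in> R \<longleftrightarrow> adj H u v"
        proof
          assume "(f u, f v) \<in> R"
          then obtain u' v' where u': "u' \<in> verts H" "v' \<in> verts H" "adj H u' v'" "f u = f u'" "f v = f v'"
            unfolding R_def by blast
          then have "u = u'" "v = v'" using inj uv unfolding inj_on_def by blast+
          then show "adj H u v" using u' by simp
        next
          assume "adj H u v"
          then show "(f u, f v) \<in> R" unfolding R_def using uv by blast
        qed
        then show "adj H u v = adj (mk (k, R)) (f u) (f v)" by (simp add: mk_def)
      qed
    qed
    ultimately show ?thesis by blast
  qed
  have "\<forall>n. \<exists>H'\<in>S. graph_iso (iter_clique_graph n G) H'"
    using iso assms by blast
  then show ?thesis unfolding convergent_graph_def using fS by blast
qed

lemma unbounded_divergent:
  assumes "\<And>n. card (verts (iter_clique_graph n G)) \<ge> n"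
  shows "divergent_graph G"
  unfolding divergent_graph_def convergent_graph_def
proof
  assume "\<exists>S. finite S \<and> (\<forall>n. \<exists>H\<in>S. graph_iso (iter_clique_graph n G) H)"
  then obtain S where S: "finite S" "\<And>n. \<exists>H\<in>S. graph_iso (iter_clique_graph n G) H" by blast
  define B where "B = Max (insert 0 ((\<lambda>H. card (verts H)) ` S))"
  obtain H where H: "H \<in> S" "graph_iso (iter_clique_graph (Suc B) G) H" using S(2) by blast
  have "card (verts (iter_clique_graph (Suc B) G)) = card (verts H)"
    using H(2) unfolding graph_iso_def by (metis bij_betw_same_card)
  also have "\<dots> \<le> B" unfolding B_def using S(1) H(1) by (intro Max_ge) auto
  finally show False using assms[of "Suc B"] by simp
qed

lemma small_K:
  assumes "finite (verts H)" "card (verts H) \<le> 1"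
  shows "verts (clique_graph H) = {set_code (verts H)}"
proof -
  have sub: "\<And>u v. u \<in> verts H \<Longrightarrow> v \<in> verts H \<Longrightarrow> u = v"
    using assms card_le_Suc0_iff_eq[of "verts H"] by simp
  have cs: "complete_set H S \<longleftrightarrow> S \<subseteq> verts H" for S
    unfolding complete_set_def using sub by blast
  have "{C. clique H C} = {verts H}" unfolding clique_def cs by blast
  then show ?thesis unfolding clique_graph_def by simp
qed

lemma small_iter:
  assumes "finite (verts H)" "card (verts H) \<le> 1"
  shows "finite (verts (iter_clique_graph n H)) \<and> card (verts (iter_clique_graph n H)) \<le> 1"
proof (induction n)
  case 0 then show ?case using assms by (simp add: iter_0)
next
  case (Suc n) then show ?case using small_K[of "iter_clique_graph n H"] by (simp add: iter_Suc)
qed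

definition F :: "nat \<Rightarrow> nat" where "F c = 2 ^ (c div 2)"

lemma octa_iter:
  assumes "octa H p" "verts H \<noteq> {}"
  shows "\<exists>q. octa (iter_clique_graph n H) q \<and> verts (iter_clique_graph n H) \<noteq> {}
           \<and> card (verts (iter_clique_graph n H)) = (F ^^ n) (card (verts H))"
proof (induction n)
  case 0 then show ?case using assms by (auto simp: iter_0)
next
  case (Suc n)
  then obtain q where q: "octa (iter_clique_graph n H) q" "verts (iter_clique_graph n H) \<noteq> {}"
    "card (verts (iter_clique_graph n H)) = (F ^^ n) (card (verts H))" by blast
  have K: "octa (iter_clique_graph (Suc n) H) (qmap q)"
    "card (verts (iter_clique_graph (Suc n) H)) = F ((F ^^ n) (card (verts H)))"
    using K_octa[OF q(1,2)] q(3) by (auto simp: iter_Suc F_def)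
  have "verts (iter_clique_graph (Suc n) H) \<noteq> {}"
  proof
    assume "verts (iter_clique_graph (Suc n) H) = {}"
    then have "card (verts (iter_clique_graph (Suc n) H)) = 0" by simp
    then show False using K(2) by (simp add: F_def)
  qed
  then show ?case using K by auto
qed

lemma pow_ge: "k \<ge> 3 \<Longrightarrow> 2 ^ k \<ge> 2 * k + (2::nat)"
proof (induction k rule: nat_induct_at_least)
  case base then show ?case by simp
next
  case (Suc n) then show ?case by simp
qed

lemma F_grow: "c \<ge> 6 \<Longrightarrow> F c \<ge> c + 1"
proof -
  assume c: "c \<ge> 6"
  have "c div 2 \<ge> 3" using c by simp
  then have "2 ^ (c div 2) \<ge> 2 * (c div 2) + 2" by (rule pow_ge)
  moreover have "c \<le> 2 * (c div 2) + 1" by simp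
  ultimately show ?thesis unfolding F_def by simp
qed

lemma F_iter_grow: "c \<ge> 6 \<Longrightarrow> (F ^^ n) c \<ge> c + n"
proof (induction n)
  case 0 then show ?case by simp
next
  case (Suc n)
  then have "(F ^^ n) c \<ge> 6" by simp
  then have "F ((F ^^ n) c) \<ge> (F ^^ n) c + 1" by (rule F_grow)
  then show ?case using Suc by simp
qed

lemma F_iter_fix: "F c = c \<Longrightarrow> (F ^^ n) c = c"
  by (induction n) auto


lemma complement_octa:
  assumes sg: "simple_graph G" and rg: "regular 1 G"
  shows "\<exists>p. octa (complement G) p"
proof -
  define V where "V = verts G"
  define p where "p u = (THE w. adj G u w)" for u
  have fV: "finite V" and inV: "\<And>u v. adj G u v \<Longrightarrow> u \<in> V \<and> v \<in> V"
    and sym: "\<And>u v. adj G u v \<Longrightarrow> adj G v u" and irr: "\<And>u. \<not> adj G u u"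
    using sg unfolding simple_graph_def V_def by blast+
  have uniq: "adj G u v \<longleftrightarrow> v = p u" if u: "u \<in> V" for u v
  proof -
    have "card {w\<in>V. adj G u w} = 1" using rg u unfolding regular_def V_def by blast
    then obtain x where x: "{w\<in>V. adj G u w} = {x}" by (rule card_1_singletonE)
    have ax: "adj G u w \<longleftrightarrow> w = x" for w
    proof
      assume "adj G u w" then have "w \<in> {w\<in>V. adj G u w}" using inV by blast
      then show "w = x" using x by blast
    next
      assume "w = x" then show "adj G u w" using x by blast
    qed
    have "p u = x" unfolding p_def using ax by blast
    then show ?thesis using ax by simp
  qed
  have inv: "p u \<in> V \<and> p u \<noteq> u \<and> p (p u) = u" if u: "u \<in> V" for u
  proof -
    have a: "adj G u (p u)" using uniq[OF u] by simp
    then have pV: "p u \<in> V" using inV by blast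
    have "adj G (p u) u" using sym a by blast
    then have "u = p (p u)" using uniq[OF pV] by simp
    moreover have "p u \<noteq> u" using a irr by metis
    ultimately show ?thesis using pV by simp
  qed
  have "octa (complement G) p"
    unfolding octa_def
  proof (intro conjI allI)
    show "finite (verts (complement G))" using fV by (simp add: complement_def V_def)
    show "invol (verts (complement G)) p" using inv unfolding invol_def complement_def V_def by simp
    fix u v
    show "adj (complement G) u v \<longleftrightarrow> u \<in> verts (complement G) \<and> v \<in> verts (complement G) \<and> u \<noteq> v \<and> u \<noteq> p v"
    proof (cases "u \<in> V \<and> v \<in> V")
      case True
      then have "adj G u v \<longleftrightarrow> u = p v" using uniq inv by metis
      then show ?thesis using True by (auto simp: complement_def V_def)
    next
      case False
      then show ?thesis by (auto simp: complement_def V_def)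
    qed
  qed
  then show ?thesis by blast
qed

theorem mainTheorem1:
  fixes G :: ngraph and n :: nat
  assumes "simple_graph G"
    and "regular 1 G"
    and "card (verts G) = n"
  shows "divergent_graph (complement G) \<longleftrightarrow> n \<ge> 6"
proof -
  obtain p where oc: "octa (complement G) p" using complement_octa assms(1,2) by blast
  have vc: "verts (complement G) = verts G" by (simp add: complement_def)
  have fin: "finite (verts G)" and iv: "invol (verts G) p" using oc vc unfolding octa_def by auto
  have ev: "even n" using transv_count[OF fin iv] assms(3) by simp
  show ?thesis
  proof (cases "verts G = {}")
    case True
    then have n0: "n = 0" using assms(3) by simp
    have "convergent_graph (complement G)"
      by (rule bounded_convergent[where B=1]) (rule small_iter, use True vc in auto)
    then show ?thesis using n0 unfolding divergent_graph_def by simp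
  next
    case False
    then have ne: "verts (complement G) \<noteq> {}" using vc by simp
    have it: "\<And>k. \<exists>q. octa (iter_clique_graph k (complement G)) q
           \<and> card (verts (iter_clique_graph k (complement G))) = (F ^^ k) n"
      using octa_iter[OF oc ne] vc assms(3) by metis
    show ?thesis
    proof (cases "n \<ge> 6")
      case True
      have "divergent_graph (complement G)"
      proof (rule unbounded_divergent)
        fix k
        obtain q where "octa (iter_clique_graph k (complement G)) q" "card (verts (iter_clique_graph k (complement G))) = (F ^^ k) n" using it by blast
        then show "k \<le> card (verts (iter_clique_graph k (complement G)))"
          using F_iter_grow[OF True, of k] by simp
      qed
      then show ?thesis using True by simp
    next
      case nl: False
      have "n \<noteq> 0" using False assms(3) fin card_0_eq by blast
      then have "n = 2 \<or> n = 4" using nl ev by presburger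
      then have Fn: "F n = n" by (auto simp: F_def)
      have "convergent_graph (complement G)"
      proof (rule bounded_convergent[where B=n])
        fix k
        obtain q where q: "octa (iter_clique_graph k (complement G)) q"
          "card (verts (iter_clique_graph k (complement G))) = (F ^^ k) n" using it by blast
        then show "finite (verts (iter_clique_graph k (complement G))) \<and> card (verts (iter_clique_graph k (complement G))) \<le> n"
          using F_iter_fix[OF Fn, of k] unfolding octa_def by simp
      qed
      then show ?thesis using nl unfolding divergent_graph_def by simp
    qed
  qed
qed

end
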